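(* Let $S=\langle P,\varphi\rangle$ be a SUT model, $t$ a strength, $N\ge1$ an integer and $lb$ an integer with $0\le lb<CAN(t,S)$ and $lb+1\le N$. Let $m=N-(lb+1)$ be the number of variables $u_i$, and consider the Weighted Partial MaxSAT instance $\Phi$ defined in the context. If $N\ge CAN(t,S)$, the optimal cost of $\Phi$ is $CAN(t,S)-(lb+1)+(|\mathcal T_a|-T(N;t,S))\cdot(m+1)$; otherwise it is $N-(lb+1)+(|\mathcal T_a|-T(N;t,S))\cdot(m+1)$.
   Context: A SUT model is $S=\langle P,\varphi\rangle$, where $P$ is a finite set of parameters, each $p\in P$ having a finite nonempty domain $d(p)$, and $\varphi$ is a propositional formula whose atoms have the form $(p=v)$ with $p\in P$, $v\in d(p)$. A test case is a full assignment $A$ giving each $p$ a value in $d(p)$ such that $\varphi$ is true when each atom $(p=v)$ is read as true iff $A(p)=v$; it is assumed that at least one test case exists. Fix a strength $t$ with $1\le t\le|P|$. A $t$-tuple is an assignment of values to exactly $t$ distinct parameters, viewed as a set of pairs $(p,v)$; a test case covers $\tau$ if it assigns $v$ to $p$ for every $(p,v)\in\tau$. A $t$-tuple is allowed if some test case covers it; $\mathcal T_a$ is the set of allowed $t$-tuples. A covering array $CA(N;t,S)$ is a list of $N$ test cases (repetitions allowed) covering every allowed $t$-tuple; $CAN(t,S)$ is the minimum such $N$. $T(N;t,S)$ is the maximum number of $t$-tuples covered by a list of $N$ test cases. $[N]=\{1,\dots,N\}$. A Weighted Partial MaxSAT instance consists of hard constraints and soft clauses $(c,w)$ with positive integer weights;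 its optimal cost is the minimum, over truth assignments satisfying all hard constraints, of the total weight of falsified soft clauses ($\infty$ if the hard constraints are unsatisfiable). Variables: $x_{i,p,v}$ ($i\in[N]$, $p\in P$, $v\in d(p)$), $c^i_\tau$ and $c_\tau$ ($i\in[N]$, $\tau\in\mathcal T_a$), $u_i$ ($i\in\{lb+2,\dots,N\}$). Hard constraints of $\Phi$: (X) for every $i\in[N]$, $p\in P$: exactly one of $\{x_{i,p,v}:v\in d(p)\}$ is true; (SUTX) for every $i\in[N]$: the formula obtained from $\varphi$ by replacing each atom $(p=v)$ with $x_{i,p,v}$; (CX) for every $i\in[N]$, $\tau\in\mathcal T_a$, $(p,v)\in\tau$: $c^i_\tau\rightarrow x_{i,p,v}$; (RC) for every $\tau\in\mathcal T_a$: $c_\tau\leftrightarrow\bigvee_{i\in[N]}c^i_\tau$; (BSU) for every $i\in\{lb+2,\dots,N-1\}$: $u_{i+1}\rightarrow u_i$; (CU) for every $i\in\{lb+2,\dots,N\}$, $\tau\in\mathcal T_a$: $c^i_\tau\rightarrow u_i$. Soft clauses: $(\neg u_i,1)$ for every $i\in\{lb+2,\dots,N\}$, and $(c_\tau,m+1)$ for every $\tau\in\mathcal T_a$. *)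

theory Defs
  imports Main "HOL-Library.Extended_Nat"
begin

datatype 'a pform = PAtom 'a | PTrue | PFalse | PNot "'a pform"
  | PAnd "'a pform" "'a pform" | POr "'a pform" "'a pform"
  | PImp "'a pform" "'a pform" | PIff "'a pform" "'a pform"

fun peval :: "('a \<Rightarrow> bool) \<Rightarrow> 'a pform \<Rightarrow> bool" where
  "peval \<alpha> (PAtom a) = \<alpha> a"
| "peval \<alpha> PTrue = True"
| "peval \<alpha> PFalse = False"
| "peval \<alpha> (PNot f) = (\<not> peval \<alpha> f)"
| "peval \<alpha> (PAnd f g) = (peval \<alpha> f \<and> peval \<alpha> g)"
| "peval \<alpha> (POr f g) = (peval \<alpha> f \<or> peval \<alpha> g)"
| "peval \<alpha> (PImp f g) = (peval \<alpha> f \<longrightarrow> peval \<alpha> g)"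
| "peval \<alpha> (PIff f g) = (peval \<alpha> f \<longleftrightarrow> peval \<alpha> g)"

text \<open>A SUT model: parameters P, domains d, formula \<phi> whose atoms (p,v) stand for (p=v).\<close>
definition sut_model :: "'p set \<Rightarrow> ('p \<Rightarrow> 'v set) \<Rightarrow> ('p \<times> 'v) pform \<Rightarrow> bool" where
  "sut_model P d \<phi> \<longleftrightarrow> finite P \<and> (\<forall>p\<in>P. finite (d p) \<and> d p \<noteq> {})
     \<and> set_pform \<phi> \<subseteq> Sigma P d"

definition test_case :: "'p set \<Rightarrow> ('p \<Rightarrow> 'v set) \<Rightarrow> ('p \<times> 'v) pform \<Rightarrow> ('p \<Rightarrow> 'v) \<Rightarrow> bool" where
  "test_case P d \<phi> A \<longleftrightarrow> (\<forall>p\<in>P. A p \<in> d p) \<and> peval (\<lambda>(p, v). A p = v) \<phi>"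

definition ttuple :: "'p set \<Rightarrow> ('p \<Rightarrow> 'v set) \<Rightarrow> nat \<Rightarrow> ('p \<times> 'v) set \<Rightarrow> bool" where
  "ttuple P d t \<tau> \<longleftrightarrow> finite \<tau> \<and> \<tau> \<subseteq> Sigma P d \<and> card \<tau> = t \<and> card (fst ` \<tau>) = t"

definition covers :: "('p \<Rightarrow> 'v) \<Rightarrow> ('p \<times> 'v) set \<Rightarrow> bool" where
  "covers A \<tau> \<longleftrightarrow> (\<forall>(p, v)\<in>\<tau>. A p = v)"

definition allowed :: "'p set \<Rightarrow> ('p \<Rightarrow> 'v set) \<Rightarrow> ('p \<times> 'v) pform \<Rightarrow> nat \<Rightarrow> ('p \<times> 'v) set set" where
  "allowed P d \<phi> t = {\<tau>. ttuple P d t \<tau> \<and> (\<exists>A. test_case P d \<phi> A \<and> covers A \<tau>)}"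

definition is_CA :: "'p set \<Rightarrow> ('p \<Rightarrow> 'v set) \<Rightarrow> ('p \<times> 'v) pform \<Rightarrow> nat \<Rightarrow> ('p \<Rightarrow> 'v) list \<Rightarrow> bool" where
  "is_CA P d \<phi> t L \<longleftrightarrow> (\<forall>A\<in>set L. test_case P d \<phi> A)
     \<and> (\<forall>\<tau>\<in>allowed P d \<phi> t. \<exists>A\<in>set L. covers A \<tau>)"

definition CAN :: "'p set \<Rightarrow> ('p \<Rightarrow> 'v set) \<Rightarrow> ('p \<times> 'v) pform \<Rightarrow> nat \<Rightarrow> nat" where
  "CAN P d \<phi> t = (LEAST N. \<exists>L. length L = N \<and> is_CA P d \<phi> t L)"

definition Tcov :: "'p set \<Rightarrow> ('p \<Rightarrow> 'v set) \<Rightarrow> ('p \<times> 'v) pform \<Rightarrow> nat \<Rightarrow> nat \<Rightarrow> nat" where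
  "Tcov P d \<phi> t N = Max {card {\<tau>. ttuple P d t \<tau> \<and> (\<exists>A\<in>set L. covers A \<tau>)} | L.
      length L = N \<and> (\<forall>A\<in>set L. test_case P d \<phi> A)}"

text \<open>An instance is given by a set of hard constraints and a set of weighted soft clauses;
  constraints/clauses are represented by their truth functions on assignments of the variables.
  The optimal cost is the infimum (in enat, so \<infinity> if no assignment satisfies the hard
  constraints) of the total weight of falsified soft clauses.\<close>
definition wpms_opt :: "(('a \<Rightarrow> bool) \<Rightarrow> bool) set \<Rightarrow> ((('a \<Rightarrow> bool) \<Rightarrow> bool) \<times> nat) set \<Rightarrow> enat" where
  "wpms_opt H S = (INF \<alpha> \<in> {\<alpha>. \<forall>h\<in>H. h \<alpha>}. enat (\<Sum>(c, w)\<in>S. if c \<alpha> then 0 else w))"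

text \<open>Variables x_{i,p,v}, c^i_\<tau>, c_\<tau>, u_i.\<close>
datatype ('p, 'v) mvar = X nat 'p 'v | Ci nat "('p \<times> 'v) set" | Ct "('p \<times> 'v) set" | U nat

definition hard_cons :: "'p set \<Rightarrow> ('p \<Rightarrow> 'v set) \<Rightarrow> ('p \<times> 'v) pform \<Rightarrow> nat \<Rightarrow> nat \<Rightarrow> nat
    \<Rightarrow> ((('p, 'v) mvar \<Rightarrow> bool) \<Rightarrow> bool) set" where
  "hard_cons P d \<phi> t N lb =
     \<comment> \<open>(X)\<close>
     {(\<lambda>\<alpha>. card {v \<in> d p. \<alpha> (X i p v)} = 1) | i p. i \<in> {1..N} \<and> p \<in> P}
   \<union> \<comment> \<open>(SUTX)\<close>
     {(\<lambda>\<alpha>. peval \<alpha> (map_pform (\<lambda>(p, v). X i p v) \<phi>)) | i. i \<in> {1..N}}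
   \<union> \<comment> \<open>(CX)\<close>
     {(\<lambda>\<alpha>. \<alpha> (Ci i \<tau>) \<longrightarrow> \<alpha> (X i p v)) | i \<tau> p v.
        i \<in> {1..N} \<and> \<tau> \<in> allowed P d \<phi> t \<and> (p, v) \<in> \<tau>}
   \<union> \<comment> \<open>(RC)\<close>
     {(\<lambda>\<alpha>. \<alpha> (Ct \<tau>) \<longleftrightarrow> (\<exists>i\<in>{1..N}. \<alpha> (Ci i \<tau>))) | \<tau>. \<tau> \<in> allowed P d \<phi> t}
   \<union> \<comment> \<open>(BSU)\<close>
     {(\<lambda>\<alpha>. \<alpha> (U (i + 1)) \<longrightarrow> \<alpha> (U i)) | i. i \<in> {lb + 2..N - 1}}
   \<union> \<comment> \<open>(CU)\<close>
     {(\<lambda>\<alpha>. \<alpha> (Ci i \<tau>) \<longrightarrow> \<alpha> (U i)) | i \<tau>. i \<in> {lb + 2..N} \<and> \<tau> \<in> allowed P d \<phi> t}"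

definition soft_cls :: "'p set \<Rightarrow> ('p \<Rightarrow> 'v set) \<Rightarrow> ('p \<times> 'v) pform \<Rightarrow> nat \<Rightarrow> nat \<Rightarrow> nat
    \<Rightarrow> (((('p, 'v) mvar \<Rightarrow> bool) \<Rightarrow> bool) \<times> nat) set" where
  "soft_cls P d \<phi> t N lb =
     {((\<lambda>\<alpha>. \<not> \<alpha> (U i)), 1) | i. i \<in> {lb + 2..N}}
   \<union> {((\<lambda>\<alpha>. \<alpha> (Ct \<tau>)), (N - (lb + 1)) + 1) | \<tau>. \<tau> \<in> allowed P d \<phi> t}"

end

theory Submission
  imports Defs
begin


lemma peval_map: "peval \<alpha> (map_pform f \<phi>) = peval (\<alpha> \<circ> f) \<phi>"
  by (induction \<phi>) auto

lemma peval_cong: "(\<forall>a\<in>set_pform \<phi>. f a = g a) \<Longrightarrow> peval f \<phi> = peval g \<phi>"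
  by (induction \<phi>) auto

locale sutctx =
  fixes P :: "'p set" and d :: "'p \<Rightarrow> 'v set" and \<phi> :: "('p \<times> 'v) pform" and t :: nat
  assumes sm: "sut_model P d \<phi>" and exA: "\<exists>A. test_case P d \<phi> A"
begin

definition cov :: "('p \<Rightarrow> 'v) list \<Rightarrow> ('p \<times> 'v) set set" where
  "cov L = {\<tau>. ttuple P d t \<tau> \<and> (\<exists>A\<in>set L. covers A \<tau>)}"

definition tcs :: "('p \<Rightarrow> 'v) list \<Rightarrow> bool" where
  "tcs L \<longleftrightarrow> (\<forall>A\<in>set L. test_case P d \<phi> A)"

definition A0 where "A0 = (SOME A. test_case P d \<phi> A)"

lemma A0: "test_case P d \<phi> A0"
  unfolding A0_def using exA by (rule someI_ex)

lemma fin_Sig: "finite (Sigma P d)"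
  using sm unfolding sut_model_def by (auto intro: finite_SigmaI)

lemma Ta_sub: "allowed P d \<phi> t \<subseteq> Pow (Sigma P d)"
  unfolding allowed_def ttuple_def by auto

lemma fin_Ta: "finite (allowed P d \<phi> t)"
  using Ta_sub fin_Sig by (meson finite_Pow_iff finite_subset)

lemma cov_sub: "tcs L \<Longrightarrow> cov L \<subseteq> allowed P d \<phi> t"
  unfolding cov_def tcs_def allowed_def by blast

lemma cov_mono: "set L \<subseteq> set L' \<Longrightarrow> cov L \<subseteq> cov L'"
  unfolding cov_def by blast

lemma Tcov_eq: "Tcov P d \<phi> t N = Max {card (cov L) | L. length L = N \<and> tcs L}"
  by (simp add: Tcov_def cov_def tcs_def)

lemma Tset_fin: "finite {card (cov L) | L. length L = N \<and> tcs L}"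
proof -
  have "{card (cov L) | L. length L = N \<and> tcs L} \<subseteq> {..card (allowed P d \<phi> t)}"
    using cov_sub fin_Ta by (auto intro: card_mono)
  then show ?thesis using finite_subset by blast
qed

lemma tcs_rep: "tcs (replicate n A0)"
  using A0 unfolding tcs_def by simp

lemma tcs_app: "tcs L \<Longrightarrow> tcs L' \<Longrightarrow> tcs (L @ L')"
  unfolding tcs_def by auto

lemma Tset_ne: "{card (cov L) | L. length L = N \<and> tcs L} \<noteq> {}"
proof -
  have "card (cov (replicate N A0)) \<in> {card (cov L) | L. length L = N \<and> tcs L}"
    using tcs_rep[of N] by auto
  then show ?thesis by blast
qed

lemma T_ge: assumes "length L \<le> N" "tcs L" shows "card (cov L) \<le> Tcov P d \<phi> t N"
proof -
  define L' where "L' = L @ replicate (N - length L) A0"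
  have l: "length L' = N" "tcs L'" using assms tcs_rep tcs_app unfolding L'_def by auto
  have "cov L \<subseteq> cov L'" unfolding L'_def by (rule cov_mono) auto
  then have "card (cov L) \<le> card (cov L')"
    using cov_sub[OF l(2)] fin_Ta by (meson card_mono finite_subset)
  also have "\<dots> \<le> Tcov P d \<phi> t N" unfolding Tcov_eq
    using l Tset_fin by (intro Max_ge) auto
  finally show ?thesis .
qed

lemma T_attain: "\<exists>L. length L = N \<and> tcs L \<and> card (cov L) = Tcov P d \<phi> t N"
proof -
  have "Tcov P d \<phi> t N \<in> {card (cov L) | L. length L = N \<and> tcs L}"
    unfolding Tcov_eq using Tset_fin Tset_ne by (rule Max_in)
  then show ?thesis by auto
qed

lemma T_le: "Tcov P d \<phi> t N \<le> card (allowed P d \<phi> t)"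
  using T_attain[of N] cov_sub fin_Ta by (metis card_mono)

lemma CA_of_cov: "tcs L \<Longrightarrow> allowed P d \<phi> t \<subseteq> cov L \<Longrightarrow> is_CA P d \<phi> t L"
  unfolding is_CA_def tcs_def cov_def by blast

lemma CA_cov: "is_CA P d \<phi> t L \<Longrightarrow> cov L = allowed P d \<phi> t \<and> tcs L"
  unfolding is_CA_def tcs_def cov_def allowed_def by blast

lemma CAN_le: "is_CA P d \<phi> t L \<Longrightarrow> CAN P d \<phi> t \<le> length L"
  unfolding CAN_def by (rule Least_le) blast

lemma CA_ex: "\<exists>L. is_CA P d \<phi> t L"
proof -
  obtain xs where xs: "set xs = allowed P d \<phi> t" using fin_Ta finite_list by blast
  define g where "g = (\<lambda>\<tau>. SOME A. test_case P d \<phi> A \<and> covers A \<tau>)"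
  have g: "\<tau> \<in> allowed P d \<phi> t \<Longrightarrow> test_case P d \<phi> (g \<tau>) \<and> covers (g \<tau>) \<tau>" for \<tau>
  proof -
    assume "\<tau> \<in> allowed P d \<phi> t"
    then have "\<exists>A. test_case P d \<phi> A \<and> covers A \<tau>" unfolding allowed_def by blast
    then show ?thesis unfolding g_def by (rule someI_ex)
  qed
  have "is_CA P d \<phi> t (map g xs)"
    unfolding is_CA_def using g xs by auto
  then show ?thesis by blast
qed

lemma CAN_CA: "\<exists>L. length L = CAN P d \<phi> t \<and> is_CA P d \<phi> t L"
proof -
  obtain L where "is_CA P d \<phi> t L" using CA_ex by blast
  then have "\<exists>N L. length L = N \<and> is_CA P d \<phi> t L" by blast
  then show ?thesis unfolding CAN_def by (rule LeastI_ex)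
qed

lemma T_full: assumes "CAN P d \<phi> t \<le> N" shows "Tcov P d \<phi> t N = card (allowed P d \<phi> t)"
proof -
  obtain L where L: "length L = CAN P d \<phi> t" "is_CA P d \<phi> t L" using CAN_CA by blast
  then have "card (cov L) \<le> Tcov P d \<phi> t N" using assms CA_cov T_ge by metis
  then show ?thesis using T_le[of N] CA_cov[OF L(2)] by simp
qed

lemma T_less: assumes "N < CAN P d \<phi> t" shows "Tcov P d \<phi> t N < card (allowed P d \<phi> t)"
proof (rule ccontr)
  assume "\<not> ?thesis"
  then have e: "Tcov P d \<phi> t N = card (allowed P d \<phi> t)" using T_le by (simp add: not_less le_antisym)
  obtain L where L: "length L = N" "tcs L" "card (cov L) = Tcov P d \<phi> t N" using T_attain by blast
  have "cov L = allowed P d \<phi> t" using cov_sub[OF L(2)] fin_Ta L(3) e by (metis card_subset_eq)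
  then have "is_CA P d \<phi> t L" using CA_of_cov L(2) by simp
  then show False using CAN_le L(1) assms by fastforce
qed

end


context sutctx begin

lemma soft_sum:
  "(\<Sum>(c, w)\<in>soft_cls P d \<phi> t N lb. if c \<alpha> then 0 else w) =
   card {i\<in>{lb+2..N}. \<alpha> (U i)} + (N - (lb+1) + 1) * card {\<tau>\<in>allowed P d \<phi> t. \<not> \<alpha> (Ct \<tau>)}"
proof -
  let ?m = "N - (lb+1) + 1"
  let ?Ta = "allowed P d \<phi> t"
  define f1 where "f1 = (\<lambda>i::nat. ((\<lambda>\<alpha>::('p,'v) mvar \<Rightarrow> bool. \<not> \<alpha> (U i)), 1::nat))"
  define f2 where "f2 = (\<lambda>\<tau>. ((\<lambda>\<alpha>::('p,'v) mvar \<Rightarrow> bool. \<alpha> (Ct \<tau>)), ?m))"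
  define g where "g = (\<lambda>(c::(('p,'v) mvar \<Rightarrow> bool) \<Rightarrow> bool, w::nat). if c \<alpha> then 0 else w)"
  have S: "soft_cls P d \<phi> t N lb = f1 ` {lb+2..N} \<union> f2 ` ?Ta"
    unfolding soft_cls_def f1_def f2_def by auto
  have disj: "f1 ` {lb+2..N} \<inter> f2 ` ?Ta = {}"
  proof (rule ccontr)
    assume "\<not> ?thesis"
    then obtain i \<tau> where "f1 i = f2 \<tau>" by blast
    then have "(\<lambda>\<alpha>::('p,'v) mvar \<Rightarrow> bool. \<not> \<alpha> (U i)) = (\<lambda>\<alpha>. \<alpha> (Ct \<tau>))"
      unfolding f1_def f2_def by simp
    from fun_cong[OF this, of "\<lambda>_. False"] show False by simp
  qed
  have inj1: "inj_on f1 {lb+2..N}"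
  proof
    fix i j assume "f1 i = f1 j"
    then have "(\<lambda>\<alpha>::('p,'v) mvar \<Rightarrow> bool. \<not> \<alpha> (U i)) = (\<lambda>\<alpha>. \<not> \<alpha> (U j))"
      unfolding f1_def by simp
    from fun_cong[OF this, of "\<lambda>x. x = U i"] show "i = j" by simp
  qed
  have inj2: "inj_on f2 ?Ta"
  proof
    fix i j assume "f2 i = f2 j"
    then have "(\<lambda>\<alpha>::('p,'v) mvar \<Rightarrow> bool. \<alpha> (Ct i)) = (\<lambda>\<alpha>. \<alpha> (Ct j))"
      unfolding f2_def by simp
    from fun_cong[OF this, of "\<lambda>x. x = Ct i"] show "i = j" by simp
  qed
  have "(\<Sum>(c, w)\<in>soft_cls P d \<phi> t N lb. if c \<alpha> then 0 else w) = sum g (soft_cls P d \<phi> t N lb)"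
    unfolding g_def by simp
  also have "\<dots> = sum g (f1 ` {lb+2..N}) + sum g (f2 ` ?Ta)"
    unfolding S using disj fin_Ta by (intro sum.union_disjoint) auto
  also have "sum g (f1 ` {lb+2..N}) = (\<Sum>i\<in>{lb+2..N}. g (f1 i))"
    using inj1 by (rule sum.reindex_cong) auto
  also have "\<dots> = (\<Sum>i\<in>{lb+2..N}. if \<alpha> (U i) then 1 else 0)"
    unfolding g_def f1_def by (intro sum.cong) auto
  also have "\<dots> = card {i\<in>{lb+2..N}. \<alpha> (U i)}"
    by (simp add: sum.inter_filter[symmetric])
  also have "sum g (f2 ` ?Ta) = (\<Sum>\<tau>\<in>?Ta. g (f2 \<tau>))"
    using inj2 by (rule sum.reindex_cong) auto
  also have "\<dots> = (\<Sum>\<tau>\<in>?Ta. if \<not> \<alpha> (Ct \<tau>) then ?m else 0)"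
    unfolding g_def f2_def by (intro sum.cong) auto
  also have "\<dots> = (\<Sum>\<tau>\<in>{\<tau>\<in>?Ta. \<not> \<alpha> (Ct \<tau>)}. ?m)"
    by (subst sum.inter_filter[OF fin_Ta]) (rule refl)
  also have "\<dots> = ?m * card {\<tau>\<in>?Ta. \<not> \<alpha> (Ct \<tau>)}" by simp
  finally show ?thesis .
qed

end


context sutctx begin

lemma upper:
  assumes L: "length L = n" "n \<le> N" "tcs L"
  shows "\<exists>\<alpha>. (\<forall>h\<in>hard_cons P d \<phi> t N lb. h \<alpha>) \<and> card {i\<in>{lb+2..N}. \<alpha> (U i)} = n - (lb+1)
     \<and> card {\<tau>\<in>allowed P d \<phi> t. \<not> \<alpha> (Ct \<tau>)} = card (allowed P d \<phi> t) - card (cov L)"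
proof -
  define row where "row i = (if 1 \<le> i \<and> i \<le> n then L!(i-1) else A0)" for i
  have rowtc: "test_case P d \<phi> (row i)" for i
    using L A0 unfolding row_def tcs_def by auto
  define \<alpha> where "\<alpha> = (\<lambda>x. case x of X i p v \<Rightarrow> row i p = v
     | Ci i \<tau> \<Rightarrow> 1 \<le> i \<and> i \<le> n \<and> covers (row i) \<tau>
     | Ct \<tau> \<Rightarrow> (\<exists>i\<in>{1..N}. 1 \<le> i \<and> i \<le> n \<and> covers (row i) \<tau>)
     | U i \<Rightarrow> i \<le> n)"
  have hX: "card {v\<in>d p. \<alpha> (X i p v)} = 1" if "p \<in> P" for i p
  proof -
    have "row i p \<in> d p" using rowtc[of i] that unfolding test_case_def by blast
    then have "{v\<in>d p. \<alpha> (X i p v)} = {row i p}" unfolding \<alpha>_def by auto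
    then show ?thesis by simp
  qed
  have hS: "peval \<alpha> (map_pform (\<lambda>(p, v). X i p v) \<phi>)" for i
  proof -
    have "\<alpha> \<circ> (\<lambda>(p, v). X i p v) = (\<lambda>(p, v). row i p = v)"
      unfolding \<alpha>_def by (auto simp: fun_eq_iff)
    then show ?thesis using rowtc[of i] unfolding peval_map test_case_def by simp
  qed
  have hCX: "\<alpha> (Ci i \<tau>) \<longrightarrow> \<alpha> (X i p v)" if "(p, v) \<in> \<tau>" for i \<tau> p v
    using that unfolding \<alpha>_def covers_def by auto
  have hRC: "\<alpha> (Ct \<tau>) \<longleftrightarrow> (\<exists>i\<in>{1..N}. \<alpha> (Ci i \<tau>))" for \<tau>
    unfolding \<alpha>_def by simp
  have hB: "\<alpha> (U (i + 1)) \<longrightarrow> \<alpha> (U i)" for i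
    unfolding \<alpha>_def by simp
  have hCU: "\<alpha> (Ci i \<tau>) \<longrightarrow> \<alpha> (U i)" for i \<tau>
    unfolding \<alpha>_def by simp
  have H: "\<forall>h\<in>hard_cons P d \<phi> t N lb. h \<alpha>"
    unfolding hard_cons_def using hX hS hCX hRC hB hCU by (insert hX hS hCX hRC hB hCU, intro ballI, elim UnE CollectE exE conjE; simp only:; blast)
  have u: "{i\<in>{lb+2..N}. \<alpha> (U i)} = {lb+2..n}"
    using L unfolding \<alpha>_def by auto
  have cv: "{\<tau>\<in>allowed P d \<phi> t. \<not> \<alpha> (Ct \<tau>)} = allowed P d \<phi> t - cov L"
  proof -
    have "\<alpha> (Ct \<tau>) \<longleftrightarrow> (\<exists>A\<in>set L. covers A \<tau>)" for \<tau>
    proof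
      assume "\<alpha> (Ct \<tau>)"
      then obtain i where "1 \<le> i" "i \<le> n" "covers (row i) \<tau>" unfolding \<alpha>_def by auto
      then have "row i = L ! (i-1)" "i - 1 < length L" using L unfolding row_def by auto
      then show "\<exists>A\<in>set L. covers A \<tau>" using \<open>covers (row i) \<tau>\<close> nth_mem by metis
    next
      assume "\<exists>A\<in>set L. covers A \<tau>"
      then obtain j where j: "j < n" "covers (L ! j) \<tau>" using L by (auto simp: in_set_conv_nth)
      then have "row (j+1) = L ! j" unfolding row_def by simp
      then have "\<exists>i\<in>{1..N}. 1 \<le> i \<and> i \<le> n \<and> covers (row i) \<tau>"
        using j L by (intro bexI[of _ "j+1"]) auto
      then show "\<alpha> (Ct \<tau>)" unfolding \<alpha>_def by simp
    qed
    then show ?thesis unfolding cov_def allowed_def by auto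
  qed
  have "card {\<tau>\<in>allowed P d \<phi> t. \<not> \<alpha> (Ct \<tau>)} = card (allowed P d \<phi> t) - card (cov L)"
    unfolding cv using cov_sub[OF L(3)] fin_Ta by (meson card_Diff_subset finite_subset)
  moreover have "card {i\<in>{lb+2..N}. \<alpha> (U i)} = n - (lb+1)" unfolding u by simp
  ultimately show ?thesis using H by blast
qed

end


context sutctx begin

lemma lower:
  assumes H: "\<forall>h\<in>hard_cons P d \<phi> t N lb. h \<alpha>"
  shows "\<exists>k L. k \<le> N \<and> length L = k \<and> tcs L \<and> {\<tau>\<in>allowed P d \<phi> t. \<alpha> (Ct \<tau>)} \<subseteq> cov L
     \<and> k - (lb+1) \<le> card {i\<in>{lb+2..N}. \<alpha> (U i)}"
proof -
  let ?Ta = "allowed P d \<phi> t"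
  have hX: "card {v\<in>d p. \<alpha> (X i p v)} = 1" if "i \<in> {1..N}" "p \<in> P" for i p
  proof -
    have "(\<lambda>\<alpha>. card {v\<in>d p. \<alpha> (X i p v)} = 1) \<in> hard_cons P d \<phi> t N lb"
      unfolding hard_cons_def using that by blast
    from bspec[OF H this] show ?thesis by simp
  qed
  have hS: "peval \<alpha> (map_pform (\<lambda>(p, v). X i p v) \<phi>)" if "i \<in> {1..N}" for i
  proof -
    have "(\<lambda>\<alpha>. peval \<alpha> (map_pform (\<lambda>(p, v). X i p v) \<phi>)) \<in> hard_cons P d \<phi> t N lb"
      unfolding hard_cons_def using that by blast
    from bspec[OF H this] show ?thesis by simp
  qed
  have hCX: "\<alpha> (X i p v)" if "i \<in> {1..N}" "\<tau> \<in> ?Ta" "(p, v) \<in> \<tau>" "\<alpha> (Ci i \<tau>)" for i \<tau> p v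
  proof -
    have "(\<lambda>\<alpha>. \<alpha> (Ci i \<tau>) \<longrightarrow> \<alpha> (X i p v)) \<in> hard_cons P d \<phi> t N lb"
      unfolding hard_cons_def using that by blast
    from bspec[OF H this] show ?thesis using that by simp
  qed
  have hRC: "\<exists>i\<in>{1..N}. \<alpha> (Ci i \<tau>)" if "\<tau> \<in> ?Ta" "\<alpha> (Ct \<tau>)" for \<tau>
  proof -
    have "(\<lambda>\<alpha>. \<alpha> (Ct \<tau>) \<longleftrightarrow> (\<exists>i\<in>{1..N}. \<alpha> (Ci i \<tau>))) \<in> hard_cons P d \<phi> t N lb"
      unfolding hard_cons_def using that by blast
    from bspec[OF H this] show ?thesis using that by simp
  qed
  have hB: "\<alpha> (U i)" if "i \<in> {lb+2..N-1}" "\<alpha> (U (i+1))" for i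
  proof -
    have "(\<lambda>\<alpha>. \<alpha> (U (i + 1)) \<longrightarrow> \<alpha> (U i)) \<in> hard_cons P d \<phi> t N lb"
      unfolding hard_cons_def using that by blast
    from bspec[OF H this] show ?thesis using that by simp
  qed
  have hCU: "\<alpha> (U i)" if "i \<in> {lb+2..N}" "\<tau> \<in> ?Ta" "\<alpha> (Ci i \<tau>)" for i \<tau>
  proof -
    have "(\<lambda>\<alpha>. \<alpha> (Ci i \<tau>) \<longrightarrow> \<alpha> (U i)) \<in> hard_cons P d \<phi> t N lb"
      unfolding hard_cons_def using that by blast
    from bspec[OF H this] show ?thesis using that by simp
  qed
  define rw where "rw i p = (THE v. v \<in> d p \<and> \<alpha> (X i p v))" for i p
  have rwp: "rw i p \<in> d p \<and> (\<forall>v\<in>d p. \<alpha> (X i p v) \<longleftrightarrow> v = rw i p)" if ip: "i \<in> {1..N}" "p \<in> P" for i p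
  proof -
    obtain v where v: "{v\<in>d p. \<alpha> (X i p v)} = {v}" using hX[OF ip] by (rule card_1_singletonE)
    then have vv: "\<forall>w. (w \<in> d p \<and> \<alpha> (X i p w)) \<longleftrightarrow> w = v" by blast
    then have "rw i p = v" unfolding rw_def by (intro the_equality) auto
    then show ?thesis using vv by blast
  qed
  have sig: "set_pform \<phi> \<subseteq> Sigma P d" using sm unfolding sut_model_def by blast
  have rwtc: "test_case P d \<phi> (rw i)" if iN: "i \<in> {1..N}" for i
  proof -
    have "peval (\<lambda>(p, v). rw i p = v) \<phi> = peval (\<alpha> \<circ> (\<lambda>(p, v). X i p v)) \<phi>"
    proof (rule peval_cong, rule ballI)
      fix a assume a: "a \<in> set_pform \<phi>"
      obtain p v where av: "a = (p, v)" by (cases a)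
      then have "p \<in> P" "v \<in> d p" using sig a by auto
      then show "(\<lambda>(p, v). rw i p = v) a = (\<alpha> \<circ> (\<lambda>(p, v). X i p v)) a"
        using rwp[OF iN] av by auto
    qed
    then show ?thesis using hS[OF iN] rwp[OF iN] unfolding test_case_def peval_map by auto
  qed
  have rwcov: "covers (rw i) \<tau>" if "i \<in> {1..N}" "\<tau> \<in> ?Ta" "\<alpha> (Ci i \<tau>)" for i \<tau>
    unfolding covers_def
  proof safe
    fix p v assume pv: "(p, v) \<in> \<tau>"
    then have "p \<in> P" "v \<in> d p" using Ta_sub that(2) by auto
    then show "rw i p = v" using rwp[OF that(1)] hCX[OF that(1,2) pv that(3)] by auto
  qed
  define K where "K = {i\<in>{1..N}. \<exists>\<tau>\<in>?Ta. \<alpha> (Ci i \<tau>)}"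
  define k where "k = (if K = {} then 0 else Max K)"
  have finK: "finite K" unfolding K_def by simp
  have kK: "i \<le> k" if "i \<in> K" for i
    using that finK unfolding k_def by (auto intro: Max_ge)
  have kin: "k \<in> K" if "1 \<le> k"
    using that finK unfolding k_def by (auto split: if_splits intro: Max_in)
  have kN: "k \<le> N"
    using finK Max_in[OF finK] unfolding k_def K_def by (cases "K = {}") auto
  define L where "L = map rw [1..<k+1]"
  have setL: "set L = rw ` {1..k}" unfolding L_def by auto
  have lenL: "length L = k" unfolding L_def by simp
  have tcsL: "tcs L" unfolding tcs_def setL using rwtc kN by auto
  have covL: "{\<tau>\<in>?Ta. \<alpha> (Ct \<tau>)} \<subseteq> cov L"
  proof safe
    fix \<tau> assume a: "\<tau> \<in> ?Ta" "\<alpha> (Ct \<tau>)"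
    then obtain i where i: "i \<in> {1..N}" "\<alpha> (Ci i \<tau>)" using hRC by blast
    then have "i \<in> K" unfolding K_def using a by blast
    then have "i \<le> k" by (rule kK)
    then have "rw i \<in> set L" unfolding setL using i by auto
    moreover have "covers (rw i) \<tau>" using rwcov i a by blast
    moreover have "ttuple P d t \<tau>" using a unfolding allowed_def by blast
    ultimately show "\<tau> \<in> cov L" unfolding cov_def by blast
  qed
  have ucard: "k - (lb+1) \<le> card {i\<in>{lb+2..N}. \<alpha> (U i)}"
  proof (cases "lb + 2 \<le> k")
    case False then show ?thesis by simp
  next
    case True
    then have "k \<in> K" using kin by simp
    then obtain \<tau> where "\<tau> \<in> ?Ta" "\<alpha> (Ci k \<tau>)" unfolding K_def by blast
    then have uk: "\<alpha> (U k)" using hCU True kN by auto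
    have "\<forall>s. lb + 2 \<le> k - s \<longrightarrow> \<alpha> (U (k - s))"
    proof
      fix s show "lb + 2 \<le> k - s \<longrightarrow> \<alpha> (U (k - s))"
      proof (induction s)
        case 0 then show ?case using uk by simp
      next
        case (Suc s)
        show ?case
        proof
          assume a: "lb + 2 \<le> k - Suc s"
          then have e: "k - Suc s + 1 = k - s" by simp
          have "\<alpha> (U (k - s))" using Suc a by simp
          then have "\<alpha> (U (k - Suc s + 1))" using e by simp
          moreover have "k - Suc s \<in> {lb+2..N-1}" using a kN by auto
          ultimately show "\<alpha> (U (k - Suc s))" using hB by blast
        qed
      qed
    qed
    note all = this
    have "{lb+2..k} \<subseteq> {i\<in>{lb+2..N}. \<alpha> (U i)}"
    proof
      fix j assume j: "j \<in> {lb+2..k}"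
      then have e: "k - (k - j) = j" by auto
      then have "\<alpha> (U (k - (k - j)))" using all j by (metis atLeastAtMost_iff)
      then show "j \<in> {i\<in>{lb+2..N}. \<alpha> (U i)}" using e j kN by auto
    qed
    then have "card {lb+2..k} \<le> card {i\<in>{lb+2..N}. \<alpha> (U i)}"
      by (intro card_mono) auto
    then show ?thesis by simp
  qed
  show ?thesis using kN lenL tcsL covL ucard by blast
qed

end


theorem proposition11:
  fixes P :: "'p set" and d :: "'p \<Rightarrow> 'v set" and \<phi> :: "('p \<times> 'v) pform"
    and t N lb :: nat
  assumes "sut_model P d \<phi>"
    and "\<exists>A. test_case P d \<phi> A"
    and "1 \<le> t" and "t \<le> card P"
    and "1 \<le> N"
    and "lb < CAN P d \<phi> t" and "lb + 1 \<le> N"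
  shows "wpms_opt (hard_cons P d \<phi> t N lb) (soft_cls P d \<phi> t N lb) =
    (let m = N - (lb + 1) in
     if N \<ge> CAN P d \<phi> t
     then enat (CAN P d \<phi> t - (lb + 1) + (card (allowed P d \<phi> t) - Tcov P d \<phi> t N) * (m + 1))
     else enat (N - (lb + 1) + (card (allowed P d \<phi> t) - Tcov P d \<phi> t N) * (m + 1)))"
proof -
  interpret sutctx P d \<phi> t using assms(1,2) by unfold_locales
  let ?Ta = "allowed P d \<phi> t"
  define a where "a = card ?Ta"
  define T where "T = Tcov P d \<phi> t N"
  define CA where "CA = CAN P d \<phi> t"
  define m where "m = N - (lb + 1)"
  define tg where "tg = (if CA \<le> N then CA - (lb+1) + (a - T) * (m+1) else N - (lb+1) + (a - T) * (m+1))"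
  have rhs: "(let m = N - (lb + 1) in
     if N \<ge> CAN P d \<phi> t
     then enat (CAN P d \<phi> t - (lb + 1) + (card (allowed P d \<phi> t) - Tcov P d \<phi> t N) * (m + 1))
     else enat (N - (lb + 1) + (card (allowed P d \<phi> t) - Tcov P d \<phi> t N) * (m + 1))) = enat tg"
    unfolding Let_def tg_def a_def T_def CA_def m_def by simp
  define F where "F = {\<alpha>. \<forall>h\<in>hard_cons P d \<phi> t N lb. h \<alpha>}"
  define cost where "cost \<alpha> = card {i\<in>{lb+2..N}. \<alpha> (U i)} + (m+1) * card {\<tau>\<in>?Ta. \<not> \<alpha> (Ct \<tau>)}"
    for \<alpha> :: "('p, 'v) mvar \<Rightarrow> bool"
  have W: "wpms_opt (hard_cons P d \<phi> t N lb) (soft_cls P d \<phi> t N lb) = (INF \<alpha>\<in>F. enat (cost \<alpha>))"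
    unfolding wpms_opt_def F_def cost_def soft_sum m_def by simp
  have aT: "T \<le> a" unfolding T_def a_def by (rule T_le)
  have up: "\<exists>\<alpha>\<in>F. cost \<alpha> = tg"
  proof (cases "CA \<le> N")
    case True
    obtain L where L: "length L = CA" "is_CA P d \<phi> t L" using CAN_CA unfolding CA_def by blast
    have cL: "cov L = ?Ta" "tcs L" using CA_cov[OF L(2)] by auto
    obtain \<alpha> where \<alpha>: "\<forall>h\<in>hard_cons P d \<phi> t N lb. h \<alpha>" "card {i\<in>{lb+2..N}. \<alpha> (U i)} = CA - (lb+1)"
      "card {\<tau>\<in>?Ta. \<not> \<alpha> (Ct \<tau>)} = card ?Ta - card (cov L)"
      using upper[OF L(1) True cL(2), of lb] by (elim exE conjE) (rule that; assumption)
    have "T = a" unfolding T_def a_def using T_full True unfolding CA_def by blast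
    then have "cost \<alpha> = tg" unfolding cost_def tg_def using \<alpha>(2,3) cL(1) True by simp
    then show ?thesis using \<alpha>(1) unfolding F_def by (intro bexI[of _ \<alpha>]) simp_all
  next
    case False
    obtain L where L: "length L = N" "tcs L" "card (cov L) = T" using T_attain unfolding T_def by blast
    obtain \<alpha> where \<alpha>: "\<forall>h\<in>hard_cons P d \<phi> t N lb. h \<alpha>" "card {i\<in>{lb+2..N}. \<alpha> (U i)} = N - (lb+1)"
      "card {\<tau>\<in>?Ta. \<not> \<alpha> (Ct \<tau>)} = card ?Ta - card (cov L)"
      using upper[OF L(1) order_refl L(2), of lb] by (elim exE conjE) (rule that; assumption)
    have "cost \<alpha> = tg" unfolding cost_def tg_def using \<alpha>(2,3) L(3) False
      by (simp add: a_def mult.commute)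
    then show ?thesis using \<alpha>(1) unfolding F_def by (intro bexI[of _ \<alpha>]) simp_all
  qed
  have low: "tg \<le> cost \<alpha>" if "\<alpha> \<in> F" for \<alpha>
  proof -
    obtain k L where kL: "k \<le> N" "length L = k" "tcs L" "{\<tau>\<in>?Ta. \<alpha> (Ct \<tau>)} \<subseteq> cov L"
      "k - (lb+1) \<le> card {i\<in>{lb+2..N}. \<alpha> (U i)}"
    proof -
      have "\<forall>h\<in>hard_cons P d \<phi> t N lb. h \<alpha>" using \<open>\<alpha> \<in> F\<close> unfolding F_def by simp
      from lower[OF this] show ?thesis by (elim exE conjE) (rule that; assumption)
    qed
    define c where "c = card {\<tau>\<in>?Ta. \<alpha> (Ct \<tau>)}"
    define cu where "cu = card {i\<in>{lb+2..N}. \<alpha> (U i)}"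
    have finC: "finite (cov L)" using cov_sub[OF kL(3)] fin_Ta finite_subset by blast
    have "{\<tau>\<in>?Ta. \<not> \<alpha> (Ct \<tau>)} = ?Ta - {\<tau>\<in>?Ta. \<alpha> (Ct \<tau>)}" by blast
    then have cc: "card {\<tau>\<in>?Ta. \<not> \<alpha> (Ct \<tau>)} = a - c"
      unfolding a_def c_def using fin_Ta by (simp add: card_Diff_subset)
    have cost: "cost \<alpha> = cu + (m+1) * (a - c)" unfolding cost_def cu_def cc ..
    have c1: "c \<le> card (cov L)" unfolding c_def using kL(4) finC by (rule card_mono[rotated])
    have c2: "card (cov L) \<le> T" unfolding T_def using T_ge kL(1-3) by simp
    have c3: "card (cov L) \<le> a" unfolding a_def using cov_sub[OF kL(3)] fin_Ta by (rule card_mono[rotated])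
    have cuk: "k - (lb+1) \<le> cu" unfolding cu_def by (rule kL(5))
    show ?thesis
    proof (cases "CA \<le> N")
      case True
      then have Ta: "T = a" unfolding T_def a_def using T_full unfolding CA_def by blast
      have tg: "tg = CA - (lb+1)" unfolding tg_def using True Ta by simp
      show ?thesis
      proof (cases "c < a")
        case True
        then have "1 \<le> a - c" by simp
        then have "(m+1) * 1 \<le> (m+1) * (a - c)" by (rule mult_le_mono2)
        then have "m + 1 \<le> (m+1) * (a - c)" by simp
        then show ?thesis unfolding cost tg using \<open>CA \<le> N\<close> m_def by linarith
      next
        case False
        then have "c = a" using c1 c3 by simp
        then have "{\<tau>\<in>?Ta. \<alpha> (Ct \<tau>)} = ?Ta" unfolding c_def a_def using fin_Ta
          by (metis (no_types, lifting) card_subset_eq mem_Collect_eq subsetI)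
        then have "is_CA P d \<phi> t L" using CA_of_cov kL(3,4) by simp
        then have "CA \<le> k" using CAN_le kL(2) unfolding CA_def by metis
        then show ?thesis unfolding cost tg using cuk by linarith
      qed
    next
      case False
      then have Ta: "T < a" unfolding T_def a_def using T_less unfolding CA_def by simp
      have tg: "tg = m + (a - T) * (m+1)" unfolding tg_def m_def using False by simp
      show ?thesis
      proof (cases "c < T")
        case True
        then have "a - T + 1 \<le> a - c" using Ta by simp
        then have "(m+1) * (a - T + 1) \<le> (m+1) * (a - c)" by (rule mult_le_mono2)
        then have "(m+1) * (a - T) + (m+1) \<le> (m+1) * (a - c)" by (simp add: algebra_simps)
        then show ?thesis unfolding cost tg by (simp add: mult.commute)
      next
        case False
        then have cT: "c = T" "card (cov L) = T" using c1 c2 by auto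
        have "k = N"
        proof (rule ccontr)
          assume "k \<noteq> N"
          then have kN: "k < N" using kL(1) by simp
          have "cov L \<noteq> ?Ta" using cT Ta unfolding a_def by auto
          then obtain \<tau>0 where \<tau>0: "\<tau>0 \<in> ?Ta" "\<tau>0 \<notin> cov L" using cov_sub[OF kL(3)] by blast
          then obtain A where A: "test_case P d \<phi> A" "covers A \<tau>0" "ttuple P d t \<tau>0"
            unfolding allowed_def by blast
          define L' where "L' = L @ [A]"
          have tL': "tcs L'" "length L' \<le> N" unfolding L'_def using kL(2,3) A(1) kN
            by (auto simp: tcs_def)
          have "insert \<tau>0 (cov L) \<subseteq> cov L'" unfolding L'_def cov_def using A by auto
          moreover have "finite (cov L')" using cov_sub[OF tL'(1)] fin_Ta finite_subset by blast
          ultimately have "card (insert \<tau>0 (cov L)) \<le> card (cov L')" by (rule card_mono[rotated])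
          then have "T + 1 \<le> card (cov L')" using \<tau>0(2) finC cT by simp
          moreover have "card (cov L') \<le> T" unfolding T_def using T_ge tL' by simp
          ultimately show False by simp
        qed
        then have "m \<le> cu" using cuk m_def by simp
        then show ?thesis unfolding cost tg cT by (simp add: mult.commute)
      qed
    qed
  qed
  obtain \<alpha>0 where a0: "\<alpha>0 \<in> F" "cost \<alpha>0 = tg" using up by blast
  have "(INF \<alpha>\<in>F. enat (cost \<alpha>)) \<le> enat tg"
    using a0 by (intro INF_lower2[OF a0(1)]) simp
  moreover have "enat tg \<le> (INF \<alpha>\<in>F. enat (cost \<alpha>))"
    using low by (intro INF_greatest) simp
  ultimately show ?thesis unfolding W rhs by (rule antisym)
qed


end
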